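(* There is a constant $C_0\ge 1$, depending only on $\gamma_2$ and $\varkappa$, such that if the constant $C$ in the definition of the weights $e_{\gamma,\varkappa}$ satisfies $C\ge C_0$, then the following hold, where $\gamma=(\gamma_1,\gamma_2)\ge(0,0)$ and $\varkappa\ge 0$. (i) If $\gamma_1\ge 0$ and $\gamma_2-\varkappa\ge 0$, then $$e_{\gamma,\varkappa}(a,b)\le e_{\gamma,0}(a,c)\,e_{\gamma,\varkappa}(c,b)\qquad\text{for all } a,b,c\in\mathbb Z^{d_*}.$$ (ii) If $\tilde\gamma\in\mathbb R^2$ satisfies $-\gamma\le\tilde\gamma\le\gamma$ (componentwise), then $$e_{\tilde\gamma,\varkappa}(a,0)\le e_{\gamma,\varkappa}(a,b)\,e_{\tilde\gamma,\varkappa}(b,0)\qquad\text{for all } a,b\in\mathbb Z^{d_*}.$$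
   Context: Let $d_*\ge1$. For $a\in\mathbb Z^{d_*}$, $|a|$ is the Euclidean norm and $\langle a\rangle=\max(|a|,1)$. For $a,b\in\mathbb Z^{d_*}$ put $[a-b]=\min(|a-b|,|a+b|)$. Pairs in $\mathbb R^2$ are ordered componentwise: $(x_1,x_2)\le(y_1,y_2)$ iff $x_1\le y_1$ and $x_2\le y_2$. For $\gamma=(\gamma_1,\gamma_2)\in\mathbb R^2$ and $\varkappa\ge0$, with a fixed constant $C\ge1$, define $$e_{\gamma,\varkappa}(a,b)=C\,e^{\gamma_1[a-b]}\max([a-b],1)^{\gamma_2}\min(\langle a\rangle,\langle b\rangle)^{\varkappa}.$$ *)

theory Defs
  imports "HOL-Analysis.Analysis"
begin

text \<open>Lattice points of Z^d are vectors of type int ^ 'd (the finite index type 'd has CARD('d) = d).\<close>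

definition znorm :: "int ^ 'd \<Rightarrow> real" where
  "znorm a = sqrt (\<Sum>i\<in>UNIV. (real_of_int (a $ i))\<^sup>2)"

definition zbr :: "int ^ 'd \<Rightarrow> real" where
  "zbr a = max (znorm a) 1"

definition zdist :: "int ^ 'd \<Rightarrow> int ^ 'd \<Rightarrow> real" where
  "zdist a b = min (znorm (a - b)) (znorm (a + b))"

definition ew :: "real \<Rightarrow> real \<Rightarrow> real \<Rightarrow> real \<Rightarrow> int ^ 'd \<Rightarrow> int ^ 'd \<Rightarrow> real" where
  "ew C g1 g2 k a b =
     C * exp (g1 * zdist a b) * (max (zdist a b) 1) powr g2 * (min (zbr a) (zbr b)) powr k"

end

theory Submission
  imports Defs
begin

definition rv :: "int ^ 'd \<Rightarrow> real ^ 'd" where "rv a = (\<chi> i. real_of_int (a $ i))"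

lemma znorm_rv: "znorm a = norm (rv a)"
  by (simp add: znorm_def rv_def norm_vec_def L2_set_def)

lemma rv_diff: "rv (a - b) = rv a - rv b" and rv_add: "rv (a + b) = rv a + rv b"
  and rv_0: "rv 0 = 0"
  by (auto simp: rv_def vec_eq_iff)

lemma zdist_rv: "zdist a b = min (norm (rv a - rv b)) (norm (rv a + rv b))"
  by (simp add: zdist_def znorm_rv rv_diff rv_add)

lemma zdist_nonneg: "zdist a b \<ge> 0" by (simp add: zdist_rv)

lemma zdist_tri: "zdist a b \<le> zdist a c + zdist c b"
proof -
  have t: "norm (x - y) \<le> norm (x - z) + norm (z - y)" for x y z :: "real^'d"
    using norm_triangle_ineq[of "x-z" "z-y"] by simp
  have t2: "norm (x + y) \<le> norm (x - z) + norm (z + y)" for x y z :: "real^'d"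
    using norm_triangle_ineq[of "x-z" "z+y"] by simp
  have t3: "norm (x + y) \<le> norm (x + z) + norm (z - y)" for x y z :: "real^'d"
    using norm_triangle_ineq4[of "x+z" "z-y"] by simp
  have t4: "norm (x - y) \<le> norm (x + z) + norm (z + y)" for x y z :: "real^'d"
    using norm_triangle_ineq4[of "x+z" "z+y"] by simp
  show ?thesis unfolding zdist_rv
    using t[of "rv a" "rv b" "rv c"] t2[of "rv a" "rv b" "rv c"] t3[of "rv a" "rv b" "rv c"] t4[of "rv a" "rv b" "rv c"]
    by linarith
qed

lemma znorm_le1: "znorm b \<le> znorm c + zdist c b"
proof -
  have "norm y \<le> norm z + norm (z - y)" "norm y \<le> norm z + norm (z + y)" for y z :: "real^'d"
    using norm_triangle_sub[of y z] apply (simp add: norm_minus_commute)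
    by (metis add.commute add_diff_cancel_right' norm_minus_commute norm_triangle_ineq4)
  thus ?thesis unfolding zdist_rv znorm_rv by (smt (verit))
qed

lemma zdist_sym: "zdist a b = zdist b a"
  by (simp add: zdist_rv norm_minus_commute add.commute)

lemma znorm_diff: "\<bar>znorm a - znorm b\<bar> \<le> zdist a b"
  using znorm_le1[of a b] znorm_le1[of b a] zdist_sym[of a b] by linarith

lemma zdist0: "zdist a 0 = znorm a" by (simp add: zdist_def)
lemma zbr0: "zbr 0 = 1" by (simp add: zbr_def znorm_rv rv_0)
lemma zbr_ge1: "zbr a \<ge> 1" by (simp add: zbr_def)

lemma two_prod: "1 \<le> (x::real) \<Longrightarrow> 1 \<le> y \<Longrightarrow> x + y \<le> 2*x*y"
  using mult_mono[of 0 "x-1" 0 "y-1"] by (simp add: algebra_simps)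

lemma key1:
  fixes A B Cc P Q R g2 k :: real
  assumes "1 \<le> Cc" "1\<le>B" "1\<le>A" "1\<le>P" "1\<le>Q" "1\<le>R" "R \<le> 2*max P Q"
    "A \<le> 2*Cc*P" "B \<le> 2*Cc*Q" "0\<le>k" "k\<le>g2"
  shows "R powr g2 * min A B powr k \<le> 2 powr (g2+k) * (P powr g2 * (Q powr g2 * min Cc B powr k))"
proof -
  define X where "X = max P Q"
  define Y where "Y = min P Q"
  define m where "m = min Cc B"
  have X1: "1 \<le> X" and Y1: "1 \<le> Y" and m1: "1 \<le> m" using assms by (auto simp: X_def Y_def m_def)
  have mAB: "min A B \<le> 2*m*Y"
  proof (cases "B \<le> Cc")
    case True
    then have "m = B" by (simp add: m_def)
    moreover have "B \<le> 2*B*Y" using Y1 assms(2) mult_mono[of 1 2 1 "B*Y"] by (simp add: algebra_simps)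
    ultimately show ?thesis by (simp add: min_le_iff_disj)
  next
    case False
    then have "m = Cc" by (simp add: m_def)
    moreover have "min A B \<le> 2*Cc*Y" using assms(8,9) by (auto simp: Y_def min_def)
    ultimately show ?thesis by simp
  qed
  have "R powr g2 * min A B powr k \<le> (2*X) powr g2 * (2*m*Y) powr k"
    apply (rule mult_mono)
    using assms X1 Y1 m1 mAB by (auto intro!: powr_mono2 simp: X_def)
  also have "\<dots> = (2 powr g2 * 2 powr k) * (X powr g2 * (m powr k * Y powr k))"
    using X1 Y1 m1 by (simp add: powr_mult)
  also have "\<dots> \<le> (2 powr g2 * 2 powr k) * (X powr g2 * (m powr k * Y powr g2))"
    using Y1 assms(11) by (intro mult_left_mono powr_mono) auto
  also have "X powr g2 * (m powr k * Y powr g2) = (X * Y) powr g2 * m powr k"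
    using X1 Y1 by (simp add: powr_mult)
  also have "X * Y = P * Q" by (simp add: X_def Y_def max_def min_def)
  also have "(2 powr g2 * 2 powr k) * ((P * Q) powr g2 * m powr k)
     = 2 powr (g2+k) * (P powr g2 * (Q powr g2 * min Cc B powr k))"
    using assms by (simp add: powr_add powr_mult m_def)
  finally show ?thesis .
qed

lemma key2:
  fixes Ma Mb R g2 h2 :: real
  assumes "1\<le>Ma" "1\<le>Mb" "1\<le>R" "Ma \<le> 2*Mb*R" "Mb \<le> 2*Ma*R" "-g2 \<le> h2" "h2 \<le> g2"
  shows "Ma powr h2 \<le> 2 powr g2 * R powr g2 * Mb powr h2"
proof (cases "h2 \<ge> 0")
  case True
  have "Ma powr h2 \<le> (2*R*Mb) powr h2" using assms True by (intro powr_mono2) (auto simp: mult_ac)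
  also have "\<dots> = (2*R) powr h2 * Mb powr h2" using assms by (simp add: powr_mult)
  also have "\<dots> \<le> (2*R) powr g2 * Mb powr h2" using assms by (intro mult_right_mono powr_mono) auto
  finally show ?thesis using assms by (simp add: powr_mult)
next
  case False
  have pos: "0 < 2*R" using assms by simp
  have "Mb / (2*R) \<le> Ma" using assms pos by (simp add: divide_le_eq mult_ac)
  then have "Ma powr h2 \<le> (Mb / (2*R)) powr h2" using assms False pos by (intro powr_mono2') auto
  also have "\<dots> = Mb powr h2 * (2*R) powr (-h2)"
    using assms pos by (simp add: powr_divide powr_minus_divide)
  also have "\<dots> \<le> Mb powr h2 * (2*R) powr g2" using assms by (intro mult_left_mono powr_mono) auto
  finally show ?thesis using assms by (simp add: powr_mult mult_ac)
qed

lemma part1: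
  fixes a b c :: "int ^ 'd"
  assumes C: "C \<ge> 2 powr (g2+k)" and g1: "g1 \<ge> 0" and k: "0 \<le> k" "k \<le> g2"
  shows "ew C g1 g2 k a b \<le> ew C g1 g2 0 a c * ew C g1 g2 k c b"
proof -
  define R where "R = max (zdist a b) 1"
  define P where "P = max (zdist a c) 1"
  define Q where "Q = max (zdist c b) 1"
  have R1: "1 \<le> R" and P1: "1 \<le> P" and Q1: "1 \<le> Q" by (auto simp: R_def P_def Q_def)
  have A1: "1 \<le> zbr a" and B1: "1 \<le> zbr b" and C1: "1 \<le> zbr c" by (simp_all add: zbr_ge1)
  have "R \<le> 2*max P Q" using zdist_tri[of a b c] zdist_nonneg[of a c] zdist_nonneg[of c b]
    by (auto simp: R_def P_def Q_def max_def)
  moreover have "zbr a \<le> 2*zbr c*P"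
  proof -
    have "zbr a \<le> zbr c + P" using znorm_le1[of a c] zdist_sym[of c a] by (auto simp: zbr_def P_def max_def)
    thus ?thesis using two_prod[OF C1 P1] by linarith
  qed
  moreover have "zbr b \<le> 2*zbr c*Q"
  proof -
    have "zbr b \<le> zbr c + Q" using znorm_le1[of b c] by (auto simp: zbr_def Q_def max_def)
    thus ?thesis using two_prod[OF C1 Q1] by linarith
  qed
  ultimately have K: "R powr g2 * min (zbr a) (zbr b) powr k
     \<le> 2 powr (g2+k) * (P powr g2 * (Q powr g2 * min (zbr c) (zbr b) powr k))"
    using key1[OF C1 B1 A1 P1 Q1 R1 _ _ _ k] by blast
  have E: "exp (g1 * zdist a b) \<le> exp (g1 * zdist a c) * exp (g1 * zdist c b)"
    using zdist_tri[of a b c] g1 by (simp add: mult_left_mono flip: exp_add distrib_left)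
  have Cpos: "C > 0" using C by (smt (verit) powr_gt_zero)
  have W0: "0 \<le> P powr g2 * (Q powr g2 * min (zbr c) (zbr b) powr k)" by simp
  have "ew C g1 g2 k a b = C * exp (g1 * zdist a b) * (R powr g2 * min (zbr a) (zbr b) powr k)"
    by (simp add: ew_def R_def)
  also have "\<dots> \<le> C * (exp (g1 * zdist a c) * exp (g1 * zdist c b)) *
      (C * (P powr g2 * (Q powr g2 * min (zbr c) (zbr b) powr k)))"
  proof (rule mult_mono)
    show "C * exp (g1 * zdist a b) \<le> C * (exp (g1 * zdist a c) * exp (g1 * zdist c b))"
      using E Cpos by simp
    show "R powr g2 * min (zbr a) (zbr b) powr k \<le> C * (P powr g2 * (Q powr g2 * min (zbr c) (zbr b) powr k))"
      using order.trans[OF K mult_right_mono[OF C W0]] .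
  qed (use Cpos in auto)
  also have "\<dots> = ew C g1 g2 0 a c * ew C g1 g2 k c b"
    using A1 C1 by (simp add: ew_def P_def Q_def mult_ac)
  finally show ?thesis .
qed

lemma part2:
  fixes a b :: "int ^ 'd"
  assumes C: "C \<ge> 2 powr g2" and g1: "g1 \<ge> 0" and k: "0 \<le> k"
    and h: "- g1 \<le> h1" "h1 \<le> g1" "- g2 \<le> h2" "h2 \<le> g2"
  shows "ew C h1 h2 k a 0 \<le> ew C g1 g2 k a b * ew C h1 h2 k b 0"
proof -
  define R where "R = max (zdist a b) 1"
  have R1: "1 \<le> R" by (simp add: R_def)
  have A1: "1 \<le> zbr a" and B1: "1 \<le> zbr b" by (simp_all add: zbr_ge1)
  have "zbr a \<le> 2*zbr b*R"
  proof -
    have "zbr a \<le> zbr b + R" using znorm_le1[of a b] zdist_sym[of b a] by (auto simp: zbr_def R_def max_def)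
    thus ?thesis using two_prod[OF B1 R1] by linarith
  qed
  moreover have "zbr b \<le> 2*zbr a*R"
  proof -
    have "zbr b \<le> zbr a + R" using znorm_le1[of b a] by (auto simp: zbr_def R_def max_def)
    thus ?thesis using two_prod[OF A1 R1] by linarith
  qed
  ultimately have K: "zbr a powr h2 \<le> 2 powr g2 * R powr g2 * zbr b powr h2"
    using key2[OF A1 B1 R1 _ _ h(3,4)] by blast
  have "h1 * (znorm a - znorm b) \<le> \<bar>h1\<bar> * \<bar>znorm a - znorm b\<bar>"
    by (metis abs_ge_self abs_mult)
  also have "\<dots> \<le> g1 * zdist a b" using h znorm_diff[of a b] g1
    by (intro mult_mono) auto
  finally have E: "exp (h1 * znorm a) \<le> exp (g1 * zdist a b) * exp (h1 * znorm b)"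
    by (simp add: algebra_simps flip: exp_add)
  have Cpos: "C > 0" using C by (smt (verit) powr_gt_zero)
  have M1: "1 \<le> min (zbr a) (zbr b) powr k" using A1 B1 k by (simp add: ge_one_powr_ge_zero)
  have mz: "min (zbr x) (zbr 0) = 1" for x :: "int^'d" using zbr_ge1[of x] by (simp add: zbr0)
  have zz: "max (zdist x 0) 1 = zbr x" for x :: "int^'d" by (simp add: zdist0 zbr_def)
  have "ew C h1 h2 k a 0 = C * exp (h1 * znorm a) * zbr a powr h2"
    unfolding ew_def zz mz by (simp add: zdist0)
  also have "\<dots> \<le> C * (exp (g1 * zdist a b) * exp (h1 * znorm b)) * (C * R powr g2 * zbr b powr h2)"
    apply (intro mult_mono E order.trans[OF K] mult_right_mono C)
    using Cpos by auto
  also have "\<dots> \<le> C * (exp (g1 * zdist a b) * exp (h1 * znorm b)) * (C * R powr g2 * zbr b powr h2)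
        * min (zbr a) (zbr b) powr k"
  proof -
    have "0 \<le> C * (exp (g1 * zdist a b) * exp (h1 * znorm b)) * (C * R powr g2 * zbr b powr h2)"
      using Cpos by simp
    from mult_left_mono[OF M1 this] show ?thesis by simp
  qed
  also have "\<dots> = ew C g1 g2 k a b * ew C h1 h2 k b 0"
    unfolding ew_def zz mz R_def by (simp add: zdist0 mult_ac)
  finally show ?thesis .
qed

theorem lemma2p1:
  fixes g2 k :: real
  assumes "g2 \<ge> 0" and "k \<ge> 0"
  shows "\<exists>C0::real. C0 \<ge> 1 \<and> (\<forall>C \<ge> C0. \<forall>g1 \<ge> 0.
     (g2 - k \<ge> 0 \<longrightarrow>
        (\<forall>a b c :: int ^ 'd. ew C g1 g2 k a b \<le> ew C g1 g2 0 a c * ew C g1 g2 k c b))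
   \<and> (\<forall>h1 h2. - g1 \<le> h1 \<and> h1 \<le> g1 \<and> - g2 \<le> h2 \<and> h2 \<le> g2 \<longrightarrow>
        (\<forall>a b :: int ^ 'd. ew C h1 h2 k a 0 \<le> ew C g1 g2 k a b * ew C h1 h2 k b 0)))"
proof -
  have le: "2 powr g2 \<le> 2 powr (g2+k)" using assms by (intro powr_mono) auto
  have one: "1 \<le> 2 powr (g2 + k)" using assms by (simp add: ge_one_powr_ge_zero)
  show ?thesis
    apply (rule exI[of _ "2 powr (g2+k)"])
    apply (intro conjI allI impI)
    subgoal by (rule one)
    subgoal by (rule part1) (use assms in auto)
    subgoal by (rule part2) (use assms in \<open>auto intro: order.trans[OF le]\<close>)
    done
qed

end
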